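(* Let $k\in\frac12+\mathbb Z$ with $k>\frac52$, $N\in4\mathbb N$, and $f\in S_k(\Gamma_0^*(N))$. For real $x>0$ put $\psi(x):=\int_0^{i\infty}f(w)(w-x)^{k-2}\,dw$. Let $P_{k-2}$ be the polynomial $$P_{k-2}(z)=i^{k-1}\sum_{n=0}^{k-5/2}\left[\binom{k-2}{n}N^n\Lambda_f(k-1-n)+\binom{k-2}{n+\frac12}N^{k-n-\frac{11}{4}}\,i^{2n-k+\frac12}\,\Lambda_f\!\left(k-\tfrac32-n\right)\right]z^n.$$ Then there is a constant $C$ such that for all $x>1$, $$\left|P_{k-2}(ix)-\psi(Nx)+i^{1-2k}\,\psi(1/x)\,(\sqrt N x)^{k-\frac52}\right|\le C\,x^{k-\frac32}.$$
   Context: All complex powers use the principal branch of the logarithm ($-\pi<\arg\le\pi$), so $i^t=e^{i\pi t/2}$ for real $t$; $\binom{z}{w}:=\frac{\Gamma(z+1)}{\Gamma(w+1)\Gamma(z-w+1)}$. For odd $d$, $\epsilon_d=1$ if $d\equiv 1\pmod 4$, $\epsilon_d=i$ if $d\equiv3\pmod4$. For $\gamma=\begin{pmatrix}*&*\\c&d\end{pmatrix}\in\Gamma_0(N)$, $(f|_k\gamma)(z)=\left(\frac cd\right)\epsilon_d^{2k}(cz+d)^{-k}f(\gamma z)$ (Kronecker symbol), and $(f|_kW_N)(z)=(-i\sqrt Nz)^{-k}f(-1/(Nz))$. $S_k(\Gamma_0^*(N))$ is the space of holomorphic cusp forms $f$ with $f|_k\gamma=f$ for all $\gamma\in\Gamma_0(N)$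 and $f|_kW_N=f$. $\Lambda_f(s)=\int_0^\infty f(it)t^{s-1}dt$ (entire continuation). ($P_{k-2}$ is the polynomial $P_a$ of Theorem 3.1 for $a=k-2$, i.e. $\int_0^{i\infty}f(w)\Phi_{k-2}(z,w)dw$.) *)

theory Defs
  imports "HOL-Analysis.Analysis" "HOL-Number_Theory.Number_Theory"
begin

definition uhp :: "complex set" where
  "uhp = {z. Im z > 0}"

definition kron_prime :: "int \<Rightarrow> int \<Rightarrow> int" where
  "kron_prime a p = (if p = 2 then (if even a then 0 else if a mod 8 = 1 \<or> a mod 8 = 7 then 1 else -1)
                     else Legendre a p)"

definition kronecker :: "int \<Rightarrow> int \<Rightarrow> int" where
  "kronecker a n =
     (if n = 0 then (if \<bar>a\<bar> = 1 then 1 else 0)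
      else (if n < 0 \<and> a < 0 then -1 else 1) *
           prod_mset (image_mset (\<lambda>p. kron_prime a (int p)) (prime_factorization (nat \<bar>n\<bar>))))"

definition eps_d :: "int \<Rightarrow> complex" where
  "eps_d d = (if d mod 4 = 1 then 1 else \<i>)"

definition Gamma0 :: "nat \<Rightarrow> (int \<times> int \<times> int \<times> int) set" where
  "Gamma0 N = {(a,b,c,d). a*d - b*c = 1 \<and> int N dvd c}"

definition SL2Z :: "(int \<times> int \<times> int \<times> int) set" where
  "SL2Z = {(a,b,c,d). a*d - b*c = 1}"

definition moebius_act :: "int \<times> int \<times> int \<times> int \<Rightarrow> complex \<Rightarrow> complex" where
  "moebius_act g z = (case g of (a,b,c,d) \<Rightarrow> (of_int a * z + of_int b) / (of_int c * z + of_int d))"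

definition slash :: "real \<Rightarrow> (complex \<Rightarrow> complex) \<Rightarrow> int \<times> int \<times> int \<times> int \<Rightarrow> complex \<Rightarrow> complex" where
  "slash k f g z = (case g of (a,b,c,d) \<Rightarrow>
      of_int (kronecker c d) * eps_d d powr (2 * complex_of_real k)
      * (of_int c * z + of_int d) powr (- complex_of_real k) * f (moebius_act g z))"

definition slash_W :: "real \<Rightarrow> nat \<Rightarrow> (complex \<Rightarrow> complex) \<Rightarrow> complex \<Rightarrow> complex" where
  "slash_W k N f z = (- \<i> * of_real (sqrt (real N)) * z) powr (- complex_of_real k) * f (- 1 / (of_nat N * z))"

definition vanishes_at_cusps :: "real \<Rightarrow> (complex \<Rightarrow> complex) \<Rightarrow> bool" where
  "vanishes_at_cusps k f \<longleftrightarrow>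
     (\<forall>g\<in>SL2Z. case g of (a,b,c,d) \<Rightarrow>
        (\<forall>e>0. \<exists>Y. \<forall>z. Im z > Y \<longrightarrow>
           cmod ((of_int c * z + of_int d) powr (- complex_of_real k) * f (moebius_act g z)) < e))"

definition cusp_forms_star :: "real \<Rightarrow> nat \<Rightarrow> (complex \<Rightarrow> complex) set" where
  "cusp_forms_star k N = {f. f holomorphic_on uhp
       \<and> (\<forall>g\<in>Gamma0 N. \<forall>z\<in>uhp. slash k f g z = f z)
       \<and> (\<forall>z\<in>uhp. slash_W k N f z = f z)
       \<and> vanishes_at_cusps k f}"

definition Lambda :: "(complex \<Rightarrow> complex) \<Rightarrow> complex \<Rightarrow> complex" where
  "Lambda f s = integral {0<..} (\<lambda>t::real. f (\<i> * of_real t) * of_real t powr (s - 1))"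

text \<open>psi(x) = int_0^{i infty} f(w) (w-x)^(k-2) dw, along w = i t.\<close>
definition psi :: "real \<Rightarrow> (complex \<Rightarrow> complex) \<Rightarrow> real \<Rightarrow> complex" where
  "psi k f x = \<i> * integral {0<..} (\<lambda>t::real. f (\<i> * of_real t) * (\<i> * of_real t - of_real x) powr (complex_of_real (k - 2)))"

definition gbinom :: "real \<Rightarrow> real \<Rightarrow> real" where
  "gbinom z w = Gamma (z + 1) / (Gamma (w + 1) * Gamma (z - w + 1))"

definition P_poly :: "real \<Rightarrow> nat \<Rightarrow> (complex \<Rightarrow> complex) \<Rightarrow> complex \<Rightarrow> complex" where
  "P_poly k N f z = \<i> powr (complex_of_real (k - 1)) *
     (\<Sum>n = 0..nat \<lfloor>k - 5/2\<rfloor>.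
        (of_real (gbinom (k - 2) (real n) * real N ^ n) * Lambda f (of_real (k - 1 - real n))
         + of_real (gbinom (k - 2) (real n + 1/2) * real N powr (k - real n - 11/4))
           * \<i> powr (complex_of_real (2 * real n - k + 1/2)) * Lambda f (of_real (k - 3/2 - real n)))
        * z ^ n)"

end

theory Submission imports Defs "HOL-Complex_Analysis.Complex_Analysis" "HOL-Real_Asymp.Real_Asymp"
begin

lemma cf_hol: "f \<in> cusp_forms_star k N \<Longrightarrow> f holomorphic_on uhp"
  by (simp add: cusp_forms_star_def)

lemma kron01: "kronecker 0 1 = 1"
  by (simp add: kronecker_def)

lemma cf_per1:
  assumes "f \<in> cusp_forms_star k N" "Im z > 0"
  shows "f (z + 1) = f z"
proof -
  have g: "(1,1,0,1) \<in> Gamma0 N" by (simp add: Gamma0_def)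
  have "slash k f (1,1,0,1) z = f z"
    using assms g by (auto simp: cusp_forms_star_def uhp_def)
  thus ?thesis by (simp add: slash_def kron01 eps_d_def moebius_act_def)
qed

lemma cf_vanish:
  assumes "f \<in> cusp_forms_star k N" "e > 0"
  shows "\<exists>Y. \<forall>z. Im z > Y \<longrightarrow> cmod (f z) < e"
proof -
  have g: "(1,0,0,1) \<in> SL2Z" by (simp add: SL2Z_def)
  have "vanishes_at_cusps k f" using assms by (simp add: cusp_forms_star_def)
  then have "\<forall>e>0. \<exists>Y. \<forall>z. Im z > Y \<longrightarrow>
           cmod ((of_int 0 * z + of_int 1) powr (- complex_of_real k) * f (moebius_act (1,0,0,1) z)) < e"
    unfolding vanishes_at_cusps_def using g by fastforce
  thus ?thesis using assms(2) by (simp add: moebius_act_def)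
qed

lemma cf_W:
  assumes "f \<in> cusp_forms_star k N" "t > 0" "N > 0"
  shows "f (\<i> * of_real t) = of_real ((sqrt (real N) * t) powr (-k)) * f (\<i> * of_real (1 / (real N * t)))"
proof -
  have "slash_W k N f (\<i> * of_real t) = f (\<i> * of_real t)"
    using assms by (auto simp: cusp_forms_star_def uhp_def)
  moreover have "- \<i> * of_real (sqrt (real N)) * (\<i> * of_real t) = of_real (sqrt (real N) * t)"
    by (simp add: algebra_simps)
  moreover have "- 1 / (of_nat N * (\<i> * of_real t)) = \<i> * of_real (1 / (real N * t))"
    using assms by (simp add: field_simps)
  ultimately show ?thesis unfolding slash_W_def
    using assms by (simp add: powr_of_real[symmetric])
qed

lemma cf_per_nat:
  assumes "f \<in> cusp_forms_star k N" "Im z > 0"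
  shows "f (z + of_nat m) = f z"
proof (induction m)
  case (Suc m)
  have "f (z + of_nat (Suc m)) = f ((z + of_nat m) + 1)" by (simp add: algebra_simps)
  also have "\<dots> = f (z + of_nat m)" using cf_per1[OF assms(1), of "z + of_nat m"] assms by simp
  finally show ?case using Suc by simp
qed simp

lemma cf_per_int:
  assumes "f \<in> cusp_forms_star k N" "Im z > 0"
  shows "f (z + of_int n) = f z"
proof (cases "n \<ge> 0")
  case True
  then obtain m where "n = int m" by (metis nonneg_eq_int)
  thus ?thesis using cf_per_nat[OF assms] by simp
next
  case False
  obtain m where m: "n = - int m" using False by (intro that[of "nat (-n)"]) simp
  have "f z = f ((z - of_nat m) + of_nat m)" by simp
  also have "\<dots> = f (z - of_nat m)" using cf_per_nat[OF assms(1), of "z - of_nat m" m] assms by simp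
  finally show ?thesis using m by simp
qed

lemma cf_exp:
  assumes "f \<in> cusp_forms_star k N" "Im w1 > 0" "Im w2 > 0"
    and "exp (2 * of_real pi * \<i> * w1) = exp (2 * of_real pi * \<i> * w2)"
  shows "f w1 = f w2"
proof -
  obtain n :: int where n: "2 * of_real pi * \<i> * w1 = 2 * of_real pi * \<i> * w2 + (of_int (2 * n) * pi) * \<i>"
    using exp_eq[THEN iffD1, OF assms(4)] by blast
  have "2 * of_real pi * \<i> * w1 = 2 * of_real pi * \<i> * (w2 + of_int n)"
    using n by (simp add: algebra_simps)
  moreover have "2 * of_real pi * \<i> \<noteq> (0::complex)" by simp
  ultimately have "w1 = w2 + of_int n" using mult_left_cancel by blast
  thus ?thesis using cf_per_int[OF assms(1) assms(3)] by simp
qed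

lemma Im_Ln_div:
  assumes "q \<noteq> 0"
  shows "Im (Ln q / (2 * of_real pi * \<i>)) = - ln (cmod q) / (2 * pi)"
proof -
  have "Ln q / (2 * of_real pi * \<i>) = - \<i> * Ln q / (2 * of_real pi)"
    by (simp add: field_simps)
  also have "Im \<dots> = - Re (Ln q) / (2 * pi)"
    by (simp add: Im_divide_of_real)
  finally show ?thesis using assms by simp
qed

lemma exp_Ln_div:
  assumes "q \<noteq> 0"
  shows "exp (2 * of_real pi * \<i> * (Ln q / (2 * of_real pi * \<i>))) = q"
  using assms by simp

lemma Im_pos_of_small:
  assumes "q \<noteq> 0" "cmod q < exp (- 2 * pi * Y)"
  shows "Im (Ln q / (2 * of_real pi * \<i>)) > Y"
proof -
  have "ln (cmod q) < - 2 * pi * Y"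
    using assms by (metis ln_exp ln_less_cancel_iff exp_gt_zero zero_less_norm_iff)
  hence h: "Y * (2 * pi) < - ln (cmod q)" by (simp add: algebra_simps)
  have "Y < (- ln (cmod q)) / (2 * pi)"
    by (rule pos_less_divide_eq[THEN iffD2]) (use h in auto)
  thus ?thesis using Im_Ln_div[OF assms(1)] by simp
qed

lemma cf_decay:
  assumes cf: "f \<in> cusp_forms_star k N"
  shows "\<exists>C Y. \<forall>z. Im z > Y \<longrightarrow> cmod (f z) \<le> C * exp (- 2 * pi * Im z)"
proof -
  obtain Y1 where Y1: "\<forall>z. Im z > Y1 \<longrightarrow> cmod (f z) < 1" using cf_vanish[OF cf, of 1] by auto
  define Y where "Y = max Y1 0"
  define r where "r = exp (- 2 * pi * Y)"
  have r0: "0 < r" unfolding r_def by simp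
  have r1: "r \<le> 1" unfolding r_def Y_def by simp
  define L where "L q = Ln q / (2 * of_real pi * \<i>)" for q
  define L2 where "L2 q = L (-q) + 1/2" for q
  define Q where "Q q = (if q = 0 then 0 else f (L q))" for q
  have hol: "f holomorphic_on uhp" using cf by (rule cf_hol)
  have uhpo: "open uhp" unfolding uhp_def by (simp add: open_halfspace_component_gt[of _ 0, simplified] open_Collect_less continuous_on_Im continuous_on_const)
  have LIm: "Im (L q) > 0" if "q \<noteq> 0" "cmod q < 1" for q
    using Im_pos_of_small[of q 0] that unfolding L_def by simp
  have expL: "exp (2 * of_real pi * \<i> * L q) = q" if "q \<noteq> 0" for q
    using that unfolding L_def by simp
  define S1 where "S1 = ball (0::complex) 1 - \<real>\<^sub>\<le>\<^sub>0"
  define S2 where "S2 = ball (0::complex) 1 - uminus ` \<real>\<^sub>\<le>\<^sub>0"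
  have S1o: "open S1" unfolding S1_def by (intro open_Diff) auto
  have S2o: "open S2" unfolding S2_def by (intro open_Diff closed_negations) auto
  have H1: "Q holomorphic_on S1"
  proof -
    have "(f \<circ> L) holomorphic_on S1"
    proof (rule holomorphic_on_compose_gen[OF _ hol])
      show "L holomorphic_on S1" unfolding L_def S1_def by (intro holomorphic_intros) auto
      show "L ` S1 \<subseteq> uhp"
      proof
        fix w assume "w \<in> L ` S1"
        then obtain q where q: "q \<in> S1" "w = L q" by auto
        have "q \<noteq> 0" using q(1) unfolding S1_def by auto
        thus "w \<in> uhp" using q LIm unfolding uhp_def S1_def by auto
      qed
    qed
    thus ?thesis
      by (rule holomorphic_transform) (auto simp: Q_def S1_def)
  qed
  have H2: "Q holomorphic_on S2"
  proof -
    have "(f \<circ> L2) holomorphic_on S2"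
    proof (rule holomorphic_on_compose_gen[OF _ hol])
      have "\<And>q. q \<in> S2 \<Longrightarrow> - q \<notin> \<real>\<^sub>\<le>\<^sub>0"
        unfolding S2_def by (metis Diff_iff image_eqI minus_minus)
      thus "L2 holomorphic_on S2" unfolding L2_def L_def
        by (intro holomorphic_intros) auto
      show "L2 ` S2 \<subseteq> uhp"
      proof
        fix w assume "w \<in> L2 ` S2"
        then obtain q where q: "q \<in> S2" "w = L2 q" by auto
        have "q \<noteq> 0" using q(1) unfolding S2_def by force
        thus "w \<in> uhp" using q LIm[of "-q"] unfolding uhp_def S2_def L2_def by auto
      qed
    qed
    moreover have "(f \<circ> L2) q = Q q" if "q \<in> S2" for q
    proof -
      have q0: "q \<noteq> 0" "cmod q < 1" using that unfolding S2_def by force+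
      have "exp (2 * of_real pi * \<i> * L2 q) = exp (2 * of_real pi * \<i> * L (-q)) * exp (of_real pi * \<i>)"
        unfolding L2_def by (simp add: algebra_simps exp_add)
      also have "\<dots> = q" using expL[of "-q"] q0 by simp
      finally have e: "exp (2 * of_real pi * \<i> * L2 q) = exp (2 * of_real pi * \<i> * L q)"
        using expL q0 by simp
      have "Im (L2 q) > 0" using LIm[of "-q"] q0 unfolding L2_def by simp
      hence "f (L2 q) = f (L q)" using cf_exp[OF cf _ _ e] LIm q0 by blast
      thus ?thesis using q0 by (simp add: Q_def)
    qed
    ultimately show ?thesis by (rule holomorphic_transform)
  qed
  have H: "Q holomorphic_on (ball 0 1 - {0})"
  proof -
    have "ball 0 1 - {0} \<subseteq> S1 \<union> S2"
    proof
      fix q :: complex assume q: "q \<in> ball 0 1 - {0}"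
      show "q \<in> S1 \<union> S2"
      proof (cases "q \<in> \<real>\<^sub>\<le>\<^sub>0")
        case True
        hence "Re q < 0" using q complex_eq_iff[of q 0] by (auto simp: complex_nonpos_Reals_iff)
        hence "q \<notin> uminus ` \<real>\<^sub>\<le>\<^sub>0" by (auto simp: complex_nonpos_Reals_iff)
        thus ?thesis using q unfolding S2_def by auto
      qed (use q in \<open>auto simp: S1_def\<close>)
    qed
    moreover have "Q holomorphic_on (S1 \<union> S2)"
      using H1 H2 S1o S2o by (auto simp: holomorphic_on_open open_Un)
    ultimately show ?thesis using holomorphic_on_subset by blast
  qed
  have Qlim: "(Q \<longlongrightarrow> Q 0) (at 0 within ball 0 1)"
  proof -
    have "Q \<midarrow>0\<rightarrow> 0"
      unfolding LIM_eq
    proof (intro allI impI)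
      fix e :: real assume e: "e > 0"
      obtain Ye where Ye: "\<forall>z. Im z > Ye \<longrightarrow> cmod (f z) < e" using cf_vanish[OF cf e] by auto
      show "\<exists>s>0. \<forall>x. x \<noteq> 0 \<and> norm (x - 0) < s \<longrightarrow> norm (Q x - 0) < e"
      proof (intro exI[of _ "exp (- 2 * pi * Ye)"] conjI allI impI)
        fix x :: complex assume x: "x \<noteq> 0 \<and> norm (x - 0) < exp (- 2 * pi * Ye)"
        hence "Im (L x) > Ye" using Im_pos_of_small[of x Ye] unfolding L_def by auto
        thus "norm (Q x - 0) < e" using Ye x by (simp add: Q_def)
      qed simp
    qed
    hence "(Q \<longlongrightarrow> 0) (at 0 within ball 0 1)" using tendsto_within_open[of 0 "ball 0 1" Q 0] by simp
    thus ?thesis by (simp add: Q_def)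
  qed
  have QH: "Q holomorphic_on ball 0 1"
    by (rule no_isolated_singularity'[of "{0}"]) (use Qlim H in auto)
  define G where "G w = Q (of_real r * w)" for w
  have GH: "G holomorphic_on ball 0 1"
  proof -
    have "(Q \<circ> (\<lambda>w. of_real r * w)) holomorphic_on ball 0 1"
    proof (rule holomorphic_on_compose_gen[OF _ QH])
      show "(\<lambda>w::complex. of_real r * w) holomorphic_on ball 0 1" by (intro holomorphic_intros)
      show "(\<lambda>w::complex. of_real r * w) ` ball 0 1 \<subseteq> ball 0 1"
      proof
        fix y :: complex assume "y \<in> (\<lambda>w. of_real r * w) ` ball 0 1"
        then obtain w where w: "cmod w < 1" "y = of_real r * w" by auto
        have "cmod y = r * cmod w" using w r0 by (simp add: norm_mult)
        also have "\<dots> \<le> cmod w" using r1 r0 by (simp add: mult_left_le_one_le mult_le_cancel_right1)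
        finally show "y \<in> ball 0 1" using w by simp
      qed
    qed
    thus ?thesis unfolding G_def o_def .
  qed
  have G0: "G 0 = 0" unfolding G_def Q_def by simp
  have Gbd: "norm (G w) < 1" if "norm w < 1" for w
  proof (cases "w = 0")
    case False
    define q where "q = of_real r * w"
    have q0: "q \<noteq> 0" using False r0 unfolding q_def by simp
    have "cmod q = r * cmod w" using r0 unfolding q_def by (simp add: norm_mult)
    also have "\<dots> < r" using that r0 by simp
    finally have "Im (L q) > Y" using Im_pos_of_small[OF q0] unfolding L_def r_def by blast
    hence "Im (L q) > Y1" unfolding Y_def by simp
    thus ?thesis using Y1 q0 unfolding G_def q_def[symmetric] Q_def by simp
  qed (simp add: G0)
  have Schw: "norm (G w) \<le> norm w" if "norm w < 1" for w
    using Schwarz_Lemma(1)[OF GH G0 Gbd that] .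
  have "\<forall>z. Im z > Y \<longrightarrow> cmod (f z) \<le> 1 / r * exp (- 2 * pi * Im z)"
  proof (intro allI impI)
    fix z assume z: "Im z > Y"
    define q where "q = exp (2 * of_real pi * \<i> * z)"
    have nq: "cmod q = exp (- 2 * pi * Im z)" unfolding q_def by simp
    have q0: "q \<noteq> 0" unfolding q_def by simp
    have "cmod q < r" unfolding nq r_def using z pi_gt_zero by simp
    hence "Im (L q) > Y" using Im_pos_of_small[OF q0] unfolding L_def r_def by blast
    hence LqI: "Im (L q) > 0" unfolding Y_def by linarith
    have zI: "Im z > 0" using z unfolding Y_def by linarith
    have "f (L q) = f z" using cf_exp[OF cf LqI zI] expL[OF q0] unfolding q_def by simp
    hence Qq: "Q q = f z" using q0 by (simp add: Q_def)
    define w where "w = q / of_real r"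
    have qw: "q = of_real r * w" unfolding w_def using r0 by simp
    have nw: "norm w = cmod q / r" unfolding w_def using r0 by (simp add: norm_divide)
    have "norm w < 1" using nw \<open>cmod q < r\<close> r0 by (simp add: divide_less_eq)
    hence "norm (G w) \<le> norm w" by (rule Schw)
    hence "cmod (f z) \<le> cmod q / r" using Qq qw nw unfolding G_def by simp
    thus "cmod (f z) \<le> 1 / r * exp (- 2 * pi * Im z)" using nq by simp
  qed
  thus ?thesis by blast
qed

lemma lim_aux0: "((\<lambda>t::real. (1 + t) powr k * exp (- t)) \<longlongrightarrow> 0) at_top"
  by real_asymp

lemma cf_axis_bound:
  assumes cf: "f \<in> cusp_forms_star k N" and N: "N > 0" and kp: "k > 0"
  shows "\<exists>B. \<forall>t>0. cmod (f (\<i> * of_real t)) * (1 + t) powr k * exp t \<le> B"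
proof -
  define F where "F t = cmod (f (\<i> * of_real t))" for t
  define \<phi> where "\<phi> t = F t * (1 + t) powr k * exp t" for t
  obtain C0 Y where CY: "\<forall>z. Im z > Y \<longrightarrow> cmod (f z) \<le> C0 * exp (- 2 * pi * Im z)"
    using cf_decay[OF cf] by blast
  define C where "C = max C0 0"
  have C0: "C \<ge> 0" unfolding C_def by simp
  have Fb: "F t \<le> C * exp (- 2 * pi * t)" if "t > Y" for t
  proof -
    have "F t \<le> C0 * exp (- 2 * pi * t)" using CY[rule_format, of "\<i> * of_real t"] that unfolding F_def by simp
    also have "\<dots> \<le> C * exp (- 2 * pi * t)" unfolding C_def by (intro mult_right_mono) auto
    finally show ?thesis .
  qed
  have "((\<lambda>t::real. C * ((1 + t) powr k * exp (- t))) \<longlongrightarrow> C * 0) at_top"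
    by (intro tendsto_mult tendsto_const lim_aux0)
  hence "eventually (\<lambda>t. C * ((1 + t) powr k * exp (- t)) < 1) at_top"
    by (intro order_tendstoD(2)) auto
  then obtain T1 where T1: "\<And>t. t \<ge> T1 \<Longrightarrow> C * ((1 + t) powr k * exp (- t)) < 1"
    unfolding eventually_at_top_linorder by blast
  define T where "T = max (max T1 (Y + 1)) 1"
  have T1': "T \<ge> 1" unfolding T_def by simp
  have Fp: "F t \<ge> 0" for t unfolding F_def by simp
  have top: "\<phi> t \<le> 1" if "t \<ge> T" for t
  proof -
    have t0: "t \<ge> 0" "t > Y" "t \<ge> T1" using that unfolding T_def by auto
    have "\<phi> t \<le> C * exp (- 2 * pi * t) * (1 + t) powr k * exp t"
      unfolding \<phi>_def by (intro mult_right_mono Fb t0) auto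
    also have "\<dots> = C * (1 + t) powr k * exp (- 2 * pi * t + t)" by (simp only: exp_add mult_ac)
    also have "\<dots> \<le> C * (1 + t) powr k * exp (- t)"
    proof (intro mult_left_mono)
      have "- 2 * pi * t + t \<le> - t" using t0(1) pi_ge_two by (simp add: mult_right_mono)
      thus "exp (- 2 * pi * t + t) \<le> exp (- t)" by simp
    qed (use C0 in auto)
    also have "\<dots> < 1" using T1[OF t0(3)] by (simp add: mult.assoc)
    finally show ?thesis by simp
  qed
  define t0 where "t0 = 1 / (real N * T)"
  have t0p: "t0 > 0" unfolding t0_def using N T1' by simp
  have N1: "1 \<le> real N" using N by simp
  have "1 * 1 \<le> real N * T" using N1 T1' by (intro mult_mono) auto
  hence t01: "t0 \<le> 1" unfolding t0_def by simp
  define sN where "sN = sqrt (real N)"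
  have sN: "sN > 0" unfolding sN_def using N by simp
  have sN2: "sN * sN = real N" unfolding sN_def by simp
  have small: "F t \<le> sN powr k" if t: "t > 0" "t \<le> t0" for t
  proof -
    define s where "s = 1 / (real N * t)"
    have sp: "s > 0" unfolding s_def using t N by simp
    have sT: "s \<ge> T"
    proof -
      have "real N * t \<le> real N * t0" using t by (intro mult_left_mono) auto
      hence "real N * t \<le> 1 / T" unfolding t0_def using N T1' by simp
      hence "T \<le> 1 / (real N * t)" using T1' t N by (simp add: field_simps)
      thus ?thesis unfolding s_def .
    qed
    have Fs: "F s * s powr k \<le> 1"
    proof -
      have "F s * s powr k \<le> F s * (1 + s) powr k * exp s"
      proof -
        have a: "s powr k \<le> (1 + s) powr k"
          using sp kp by (intro powr_mono2) auto
        have "1 \<le> exp s" using sp by simp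
        hence "(1 + s) powr k * 1 \<le> (1 + s) powr k * exp s" by (intro mult_left_mono) auto
        hence "s powr k \<le> (1 + s) powr k * exp s" using a by simp
        hence "F s * s powr k \<le> F s * ((1 + s) powr k * exp s)" using Fp by (intro mult_left_mono) auto
        thus ?thesis by (simp add: mult.assoc)
      qed
      also have "\<dots> \<le> 1" using top[OF sT] unfolding \<phi>_def .
      finally show ?thesis .
    qed
    have W: "F t = (sN * t) powr (-k) * F s"
      using cf_W[OF cf t(1) N] unfolding F_def s_def sN_def by (simp add: norm_mult)
    have "F t * (sN * t) powr k = F s"
      using W sN t by (simp add: powr_minus field_simps)
    also have "\<dots> \<le> 1 / s powr k" using Fs sp by (simp add: field_simps)
    also have "1 / s powr k = (real N * t) powr k"
      unfolding s_def using N t powr_divide[of 1 "real N * t" k] by simp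
    finally have "F t * (sN * t) powr k \<le> (real N * t) powr k" .
    moreover have "(real N * t) powr k = sN powr k * (sN * t) powr k"
      using sN2 sN t by (simp add: powr_mult[symmetric] mult.assoc[symmetric])
    moreover have "(sN * t) powr k > 0" using sN t by simp
    ultimately show ?thesis by simp
  qed
  define B1 where "B1 = sN powr k * 2 powr k * exp 1"
  have smallphi: "\<phi> t \<le> B1" if t: "t > 0" "t \<le> t0" for t
  proof -
    have a: "(1 + t) powr k \<le> 2 powr k" using t t01 kp by (intro powr_mono2) auto
    have b: "exp t \<le> exp 1" using t t01 by simp
    have "\<phi> t \<le> sN powr k * 2 powr k * exp 1"
      unfolding \<phi>_def using small[OF t] a b Fp
      by (intro mult_mono) auto
    thus ?thesis unfolding B1_def .
  qed
  have fc: "continuous_on uhp f" using cf_hol[OF cf] by (rule holomorphic_on_imp_continuous_on)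
  have "continuous_on {t0..T} (\<lambda>t. f (\<i> * of_real t))"
    by (rule continuous_on_compose2[OF fc]) (use t0p in \<open>auto intro!: continuous_intros simp: uhp_def\<close>)
  hence "continuous_on {t0..T} \<phi>"
    unfolding \<phi>_def F_def using t0p by (auto intro!: continuous_intros)
  hence "compact (\<phi> ` {t0..T})" by (intro compact_continuous_image) auto
  then obtain b where b: "\<forall>x\<in>\<phi> ` {t0..T}. norm x \<le> b"
    using compact_imp_bounded bounded_pos by metis
  show ?thesis
  proof (intro exI[of _ "max (max 1 B1) b"] allI impI)
    fix t :: real assume "t > 0"
    consider "t \<le> t0" | "t \<ge> T" | "t \<in> {t0..T}" by fastforce
    hence "\<phi> t \<le> max (max 1 B1) b"
    proof cases
      case 1 thus ?thesis using smallphi \<open>t > 0\<close> by fastforce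
    next
      case 2 thus ?thesis using top by fastforce
    next
      case 3
      hence "norm (\<phi> t) \<le> b" using b by blast
      thus ?thesis by simp
    qed
    thus "cmod (f (\<i> * of_real t)) * (1 + t) powr k * exp t \<le> max (max 1 B1) b"
      unfolding \<phi>_def F_def .
  qed
qed

lemma exp_minus_has_integral: "((\<lambda>x::real. exp (- x)) has_integral 1) {0<..}"
proof -
  have "((\<lambda>x::real. exp (- 1 * x)) has_integral exp (- 1 * 0) / 1) {0..}"
    by (rule has_integral_exp_minus_to_infinity) simp
  hence i: "((\<lambda>x::real. exp (- x)) has_integral 1) {0..}" by simp
  have n1: "negligible {x \<in> {0..} - {0<..}. exp (- x) \<noteq> (0::real)}"
    by (rule negligible_subset[of "{0}"]) auto
  have n2: "negligible {x \<in> {0<..} - {0..}. exp (- x) \<noteq> (0::real)}"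
    by (rule negligible_subset[of "{}"]) auto
  show ?thesis using has_integral_spike_set_eq[OF n1 n2] i by blast
qed

lemma psi_bound:
  assumes B: "\<forall>t>0. cmod (f (\<i> * of_real t)) * (1 + t) powr k * exp t \<le> B"
    and k2: "k > 2" and y: "y \<ge> 0"
  shows "cmod (psi k f y) \<le> B * (1 + y) powr (k - 2)"
proof -
  define g where "g t = f (\<i> * of_real t) * (\<i> * of_real t - of_real y) powr (complex_of_real (k - 2))" for t :: real
  define h where "h t = B * (1 + y) powr (k - 2) * exp (- t)" for t :: real
  have "0 \<le> cmod (f (\<i> * of_real 1)) * (1 + 1) powr k * exp 1" by simp
  hence B0: "B \<ge> 0" using B[rule_format, OF zero_less_one] by linarith
  have hint: "(h has_integral (B * (1 + y) powr (k - 2) * 1)) {0<..}"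
    unfolding h_def by (rule has_integral_mult_right[OF exp_minus_has_integral])
  have bound: "norm (g t) \<le> h t" if t: "t \<in> {0<..}" for t
  proof -
    define F where "F = cmod (f (\<i> * of_real t))"
    have Fp: "F \<ge> 0" unfolding F_def by simp
    have t0: "t > 0" using t by simp
    have ng: "norm (g t) = F * cmod (\<i> * of_real t - of_real y) powr (k - 2)"
      unfolding g_def F_def by (simp add: norm_mult norm_powr_real_powr')
    have "cmod (\<i> * of_real t - of_real y) \<le> cmod (\<i> * of_real t) + cmod (of_real y :: complex)"
      by (rule norm_triangle_ineq4)
    also have "\<dots> = t + y" using t0 y by (simp add: norm_mult)
    also have "\<dots> \<le> (1 + t) * (1 + y)" using t0 y by (simp add: distrib_left distrib_right)
    finally have c1: "cmod (\<i> * of_real t - of_real y) \<le> (1 + t) * (1 + y)" .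
    have c2: "cmod (\<i> * of_real t - of_real y) powr (k - 2) \<le> (1 + t) powr (k - 2) * (1 + y) powr (k - 2)"
      using powr_mono2[OF _ _ c1, of "k - 2"] k2 t0 y by (simp add: powr_mult)
    have c3: "(1 + t) powr (k - 2) \<le> (1 + t) powr k" using t0 by (intro powr_mono) auto
    have c4: "F * (1 + t) powr k \<le> B * exp (- t)"
    proof -
      have "F * (1 + t) powr k = F * (1 + t) powr k * (exp t * exp (- t))"
        by (simp add: exp_minus_inverse)
      also have "\<dots> = F * (1 + t) powr k * exp t * exp (- t)" by (simp only: mult.assoc)
      also have "\<dots> \<le> B * exp (- t)"
        using B t0 unfolding F_def by (intro mult_right_mono) auto
      finally show ?thesis .
    qed
    have "norm (g t) \<le> F * ((1 + t) powr (k - 2) * (1 + y) powr (k - 2))"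
      unfolding ng using c2 Fp by (intro mult_left_mono) auto
    also have "\<dots> \<le> F * ((1 + t) powr k * (1 + y) powr (k - 2))"
      using c3 Fp by (intro mult_left_mono mult_right_mono) auto
    also have "\<dots> = (F * (1 + t) powr k) * (1 + y) powr (k - 2)" by simp
    also have "\<dots> \<le> (B * exp (- t)) * (1 + y) powr (k - 2)"
      using c4 by (intro mult_right_mono) auto
    also have "\<dots> = h t" unfolding h_def by simp
    finally show ?thesis .
  qed
  have "cmod (integral {0<..} g) \<le> B * (1 + y) powr (k - 2)"
  proof (cases "g integrable_on {0<..}")
    case True
    have "cmod (integral {0<..} g) \<le> integral {0<..} h"
      by (rule integral_norm_bound_integral[OF True]) (use hint bound in auto)
    also have "\<dots> = B * (1 + y) powr (k - 2)" using hint by (simp add: integral_unique)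
    finally show ?thesis .
  next
    case False
    thus ?thesis using B0 by (simp add: not_integrable_integral)
  qed
  thus ?thesis unfolding psi_def g_def by (simp add: norm_mult)
qed

lemma poly_bound:
  fixes a :: "nat \<Rightarrow> complex" and c z :: complex and x e :: real
  assumes "\<And>n. n \<le> m \<Longrightarrow> real n \<le> e" "x \<ge> 1" "cmod z = x"
  shows "cmod (c * (\<Sum>n = 0..m. a n * z ^ n)) \<le> (cmod c * (\<Sum>n = 0..m. cmod (a n))) * x powr e"
proof -
  have "cmod (\<Sum>n = 0..m. a n * z ^ n) \<le> (\<Sum>n = 0..m. cmod (a n * z ^ n))" by (rule norm_sum)
  also have "\<dots> \<le> (\<Sum>n = 0..m. cmod (a n) * x powr e)"
  proof (rule sum_mono)
    fix n assume "n \<in> {0..m}"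
    hence ne: "real n \<le> e" using assms(1) by auto
    have "x ^ n = x powr real n" using assms(2) by (simp add: powr_realpow)
    also have "\<dots> \<le> x powr e" using ne assms(2) by (intro powr_mono) auto
    finally have "x ^ n \<le> x powr e" .
    thus "cmod (a n * z ^ n) \<le> cmod (a n) * x powr e"
      using assms(3) by (simp add: norm_mult norm_power mult_left_mono)
  qed
  also have "\<dots> = (\<Sum>n = 0..m. cmod (a n)) * x powr e" by (simp add: sum_distrib_right)
  finally have "cmod (\<Sum>n = 0..m. a n * z ^ n) \<le> (\<Sum>n = 0..m. cmod (a n)) * x powr e" .
  hence "cmod c * cmod (\<Sum>n = 0..m. a n * z ^ n) \<le> cmod c * ((\<Sum>n = 0..m. cmod (a n)) * x powr e)"
    by (intro mult_left_mono) auto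
  thus ?thesis by (simp add: norm_mult mult.assoc)
qed

lemma P_bound:
  assumes "k > 5/2"
  shows "\<exists>K. \<forall>x>1. cmod (P_poly k N f (\<i> * of_real x)) \<le> K * x powr (k - 3/2)"
proof -
  have m: "real n \<le> k - 3/2" if "n \<le> nat \<lfloor>k - 5/2\<rfloor>" for n
  proof -
    have "real n \<le> real (nat \<lfloor>k - 5/2\<rfloor>)" using that by simp
    also have "\<dots> = of_int \<lfloor>k - 5/2\<rfloor>" using assms by simp
    also have "\<dots> \<le> k - 5/2" by simp
    finally show ?thesis by simp
  qed
  show ?thesis
    unfolding P_poly_def
    apply (rule exI)
    apply (intro allI impI)
    apply (rule poly_bound)
    using m apply (auto simp: norm_mult)
    done
qed

theorem proposition3p2:
  fixes k :: real and N :: nat and f :: "complex \<Rightarrow> complex"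
  assumes "k - 1/2 \<in> \<int>" and "k > 5/2"
    and "N > 0" and "4 dvd N"
    and "f \<in> cusp_forms_star k N"
  shows "\<exists>C. \<forall>x::real. x > 1 \<longrightarrow>
     cmod (P_poly k N f (\<i> * of_real x) - psi k f (real N * x)
           + \<i> powr (complex_of_real (1 - 2 * k)) * psi k f (1 / x)
             * of_real ((sqrt (real N) * x) powr (k - 5/2)))
       \<le> C * x powr (k - 3/2)"
proof -
  have kp: "k > 0" "k > 2" using assms(2) by auto
  obtain B where B: "\<forall>t>0. cmod (f (\<i> * of_real t)) * (1 + t) powr k * exp t \<le> B"
    using cf_axis_bound[OF assms(5) assms(3) kp(1)] by blast
  obtain K where K: "\<forall>x>1. cmod (P_poly k N f (\<i> * of_real x)) \<le> K * x powr (k - 3/2)"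
    using P_bound[OF assms(2)] by blast
  have "0 \<le> cmod (f (\<i> * of_real 1)) * (1 + 1) powr k * exp 1" by simp
  hence B0: "B \<ge> 0" using B[rule_format, OF zero_less_one] by linarith
  define c3 where "c3 = cmod (\<i> powr (complex_of_real (1 - 2 * k)))"
  define sN where "sN = sqrt (real N)"
  have sN: "sN > 0" unfolding sN_def using assms(3) by simp
  define C where "C = K + B * (real N + 1) powr (k - 2) + c3 * B * 2 powr (k - 2) * sN powr (k - 5/2)"
  show ?thesis
  proof (intro exI[of _ C] allI impI)
    fix x :: real assume x: "x > 1"
    have x0: "x > 0" using x by simp
    have xp1: "x powr (k - 2) \<le> x powr (k - 3/2)" using x by (intro powr_mono) auto
    have xp2: "x powr (k - 5/2) \<le> x powr (k - 3/2)" using x by (intro powr_mono) auto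
    define a where "a = P_poly k N f (\<i> * of_real x)"
    define b where "b = psi k f (real N * x)"
    define c where "c = \<i> powr (complex_of_real (1 - 2 * k)) * psi k f (1 / x)
             * of_real ((sqrt (real N) * x) powr (k - 5/2))"
    have "cmod (a - b + c) \<le> cmod (a - b) + cmod c" by (rule norm_triangle_ineq)
    also have "\<dots> \<le> cmod a + cmod b + cmod c" using norm_triangle_ineq4[of a b] by simp
    finally have tri: "cmod (a - b + c) \<le> cmod a + cmod b + cmod c" .
    have ba: "cmod a \<le> K * x powr (k - 3/2)" unfolding a_def using K x by blast
    have bb: "cmod b \<le> B * (real N + 1) powr (k - 2) * x powr (k - 3/2)"
    proof -
      have "cmod b \<le> B * (1 + real N * x) powr (k - 2)"
        unfolding b_def using psi_bound[OF B kp(2)] x0 by simp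
      also have "\<dots> \<le> B * ((real N + 1) * x) powr (k - 2)"
      proof (intro mult_left_mono powr_mono2)
        show "1 + real N * x \<le> (real N + 1) * x" using x by (simp add: algebra_simps)
      qed (use kp x0 B0 in auto)
      also have "\<dots> = B * (real N + 1) powr (k - 2) * x powr (k - 2)"
        using x0 by (simp add: powr_mult)
      also have "\<dots> \<le> B * (real N + 1) powr (k - 2) * x powr (k - 3/2)"
        using xp1 B0 by (intro mult_left_mono) auto
      finally show ?thesis .
    qed
    have bc: "cmod c \<le> c3 * B * 2 powr (k - 2) * sN powr (k - 5/2) * x powr (k - 3/2)"
    proof -
      have p: "cmod (psi k f (1 / x)) \<le> B * 2 powr (k - 2)"
      proof -
        have "cmod (psi k f (1 / x)) \<le> B * (1 + 1 / x) powr (k - 2)"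
          using psi_bound[OF B kp(2)] x0 by simp
        also have "\<dots> \<le> B * 2 powr (k - 2)"
          using x kp B0 by (intro mult_left_mono powr_mono2) auto
        finally show ?thesis .
      qed
      have nc: "cmod c = c3 * cmod (psi k f (1 / x)) * (sN * x) powr (k - 5/2)"
        unfolding c_def c3_def sN_def by (simp add: norm_mult)
      also have "\<dots> \<le> c3 * (B * 2 powr (k - 2)) * (sN * x) powr (k - 5/2)"
        using p unfolding c3_def by (intro mult_right_mono mult_left_mono) auto
      also have "\<dots> = c3 * B * 2 powr (k - 2) * sN powr (k - 5/2) * x powr (k - 5/2)"
        using sN x0 by (simp add: powr_mult)
      also have "\<dots> \<le> c3 * B * 2 powr (k - 2) * sN powr (k - 5/2) * x powr (k - 3/2)"
        using xp2 B0 unfolding c3_def by (intro mult_left_mono) auto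
      finally show ?thesis .
    qed
    have "cmod (a - b + c) \<le> C * x powr (k - 3/2)"
      using tri ba bb bc unfolding C_def by (simp add: algebra_simps)
    thus "cmod (P_poly k N f (\<i> * of_real x) - psi k f (real N * x)
           + \<i> powr (complex_of_real (1 - 2 * k)) * psi k f (1 / x)
             * of_real ((sqrt (real N) * x) powr (k - 5/2)))
       \<le> C * x powr (k - 3/2)" unfolding a_def b_def c_def .
  qed
qed

end
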